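(* Let $\beta\in\mathbb{K}$ and let $G_{\mathrm{cyc}}$ be the $q$-grammar with master variables $\{x,y,z,e\}$, rule $x_j\mapsto q^jy_jx_{j+1}$, $y_j\mapsto q^jy_jx_{j+1}$, $z_j\mapsto q^jy_jx_{j+1}$, $e_j\mapsto\beta q^je_jz_{j+1}$ ($j\ge0$), and order KSO (identity). Let $\phi$ be the evaluation $\phi(x_j)=x$, $\phi(y_j)=y$, $\phi(z_j)=z$, $\phi(e_j)=e$ (commuting indeterminates; values taken in rational functions over $\mathbb{K}$). Then, as formal power series in $u$, \[ \phi\big(\mathrm{Gen}^{(G_{\mathrm{cyc}})}_q(e_0;u)\big)=e\prod_{k=0}^{\infty}\frac{1}{1-\beta uq^k\,\phi\big(\mathrm{Gen}^{(G_{\mathrm{cyc}})}_q(z_1;uq^k)\big)}, \] where \[ \phi\big(\mathrm{Gen}^{(G_{\mathrm{cyc}})}_q(z_1;uq^k)\big)=\frac{z-y+x^{-1}y(x-z)\,e_q\big((x-y)uq^{k+1}\big)}{1-x^{-1}y\,e_q\big((x-y)uq^{k+1}\big)}. \]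
   Context: $\mathbb{K}$ is a commutative ring with unity and characteristic zero, $q$ an indeterminate. For a set $S$ of master variables, $\mathbb{S}=\{s_i:s\in S,\ i\ge0\}$ is a set of non-commuting variables, $F(\mathbb{S})$ the free group on $\mathbb{S}$, $\mathbb{E}=\mathbb{K}[q][F(\mathbb{S})]$ its group algebra. A rule $R$ assigns to each $s_i$ an element of $\mathbb{E}$, extended by $R(s_i^{-1})=-s_i^{-1}R(s_i)s_{i+1}^{-1}$. The up-arrow $\uparrow$ is the linear map replacing each letter $s_i^{\pm1}$ by $s_{i+1}^{\pm1}$. The $q$-derivative of a $q$-grammar $(S,R,\rho)$ ($\rho$ an order, i.e. a letter-permuting rewriting of words; KSO is the identity) is the $\mathbb{K}[q]$-linear map with $D(w_1\cdots w_n)=\sum_{j=1}^n\rho\big(w_1\cdots w_{j-1}R(w_j)\uparrow(w_{j+1}\cdots w_n)\big)$ for letters $w_j\in\mathbb{S}\cup\mathbb{S}^{-1}$, $D^0=\mathrm{id}$, $D^k=D\circ D^{k-1}$. An evaluation extends to a $\mathbb{K}[q]$-linear ring morphism with $\phi(s_i^{-1})=\phi(s_i)^{-1}$. $\mathrm{Gen}^{(G)}_q(f;u)=\sum_{n\ge0}D^n(f)u^n/(q;q)_n$, $(q;q)_n=\prod_{i=1}^n(1-q^i)$, $\phi$ applied coefficientwise; $e_q(u)=\sum_{n\ge0}u^n/(q;q)_n$. *)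

theory Defs
  imports "HOL-Computational_Algebra.Formal_Power_Series"
          "HOL-Computational_Algebra.Polynomial_FPS"
          "HOL-Computational_Algebra.Fraction_Field"
begin

datatype mvar = MX | MY | MZ | ME

text \<open>A letter is (s, i, inv): inv = False means s_i, inv = True means s_i^{-1}.\<close>
type_synonym letter = "mvar \<times> nat \<times> bool"

text \<open>Elements of the algebra are represented as formal K[q]-linear combinations of
  words in the letters (lists of coefficient/word pairs).\<close>
type_synonym 'k elt = "('k poly \<times> letter list) list"

definition elt_mult :: "'k::comm_ring_1 elt \<Rightarrow> 'k elt \<Rightarrow> 'k elt" where
  "elt_mult a b = [(c * d, v @ w). (c, v) \<leftarrow> a, (d, w) \<leftarrow> b]"

definition word_elt :: "letter list \<Rightarrow> 'k::comm_ring_1 elt" where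
  "word_elt w = [(1, w)]"

fun up_letter :: "letter \<Rightarrow> letter" where
  "up_letter (s, i, b) = (s, Suc i, b)"

fun letter_rule :: "(mvar \<Rightarrow> nat \<Rightarrow> 'k::comm_ring_1 elt) \<Rightarrow> letter \<Rightarrow> 'k elt" where
  "letter_rule r (s, i, False) = r s i"
| "letter_rule r (s, i, True) =
     elt_mult (elt_mult [(-1, [(s, i, True)])] (r s i)) (word_elt [(s, Suc i, True)])"

text \<open>q-derivative (order KSO = identity) of a single word.\<close>
definition D_word :: "(mvar \<Rightarrow> nat \<Rightarrow> 'k::comm_ring_1 elt) \<Rightarrow> letter list \<Rightarrow> 'k elt" where
  "D_word r w = concat (map (\<lambda>j. elt_mult (elt_mult (word_elt (take j w)) (letter_rule r (w ! j)))
                                      (word_elt (map up_letter (drop (Suc j) w))))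
                            [0..<length w])"

definition qD :: "(mvar \<Rightarrow> nat \<Rightarrow> 'k::comm_ring_1 elt) \<Rightarrow> 'k elt \<Rightarrow> 'k elt" where
  "qD r a = concat (map (\<lambda>(c, w). map (\<lambda>(d, v). (c * d, v)) (D_word r w)) a)"

definition cyc_rule :: "'k::comm_ring_1 \<Rightarrow> mvar \<Rightarrow> nat \<Rightarrow> 'k elt" where
  "cyc_rule \<beta> s j = (case s of
       ME \<Rightarrow> [(monom \<beta> j, [(ME, j, False), (MZ, Suc j, False)])]
     | _ \<Rightarrow> [(monom 1 j, [(MY, j, False), (MX, Suc j, False)])])"

type_synonym 'k ratfun = "'k poly poly poly poly fract"

definition rf_const :: "'k::idom \<Rightarrow> 'k ratfun" where
  "rf_const c = Fract [:[:[:[:c:]:]:]:] 1"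

definition rf_x :: "'k::idom ratfun" where "rf_x = Fract [:0, 1:] 1"
definition rf_y :: "'k::idom ratfun" where "rf_y = Fract [:[:0, 1:]:] 1"
definition rf_z :: "'k::idom ratfun" where "rf_z = Fract [:[:[:0, 1:]:]:] 1"
definition rf_e :: "'k::idom ratfun" where "rf_e = Fract [:[:[:[:0, 1:]:]:]:] 1"

definition cyc_val :: "mvar \<Rightarrow> 'k::idom ratfun" where
  "cyc_val s = (case s of MX \<Rightarrow> rf_x | MY \<Rightarrow> rf_y | MZ \<Rightarrow> rf_z | ME \<Rightarrow> rf_e)"

text \<open>Evaluation \<phi>: K[q]-linear ring morphism, q \<mapsto> q (the fps variable),
  s_i \<mapsto> value of s, s_i^{-1} \<mapsto> its inverse.\<close>
definition phi :: "'k::idom elt \<Rightarrow> 'k ratfun fps" where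
  "phi a = (\<Sum>(c, w) \<leftarrow> a. fps_of_poly (map_poly rf_const c) *
              (\<Prod>(s, i, b) \<leftarrow> w. fps_const (if b then inverse (cyc_val s) else cyc_val s)))"

definition qpoch :: "nat \<Rightarrow> 'a::comm_ring_1 fps" where
  "qpoch n = (\<Prod>i\<in>{1..n}. 1 - fps_X ^ i)"

text \<open>\<phi>(Gen_q(f; c u)) as a power series in u whose coefficients are power series in q:
  coefficient of u^n is \<phi>(D^n f) c^n / (q;q)_n.\<close>
definition gen_phi :: "'k::idom \<Rightarrow> 'k elt \<Rightarrow> 'k ratfun fps \<Rightarrow> 'k ratfun fps fps" where
  "gen_phi \<beta> f c = Abs_fps (\<lambda>n. phi ((qD (cyc_rule \<beta>) ^^ n) f) * c ^ n * inverse (qpoch n))"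

definition eq_exp :: "'a::field fps \<Rightarrow> 'a fps fps" where
  "eq_exp a = Abs_fps (\<lambda>n. a ^ n * inverse (qpoch n))"

end

theory Submission
  imports Defs
begin
unbundle fps_syntax

definition sc :: "'k::comm_ring_1 poly \<Rightarrow> 'k elt \<Rightarrow> 'k elt" where
  "sc c a = map (\<lambda>(d,v). (c*d, v)) a"

lemma qD_append: "qD r (a @ b) = qD r a @ qD r b" by (simp add: qD_def)

lemma qDn_append: "(qD r ^^ n) (a @ b) = (qD r ^^ n) a @ (qD r ^^ n) b"
  by (induction n) (simp_all add: qD_append)

lemma qD_sc: "qD r (sc c a) = sc c (qD r a)"
  unfolding qD_def sc_def
  by (induction a) (auto simp: mult.assoc case_prod_beta)

lemma qDn_sc: "(qD r ^^ n) (sc c a) = sc c ((qD r ^^ n) a)"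
  by (induction n) (simp_all add: qD_sc)

lemma qD_single: "qD r [(c,w)] = sc c (D_word r w)"
  by (simp add: qD_def sc_def)

lemma sc_one: "sc 1 a = a" by (simp add: sc_def case_prod_beta)

definition rfc :: "'k::idom poly \<Rightarrow> 'k ratfun fps" where
  "rfc c = fps_of_poly (map_poly rf_const c)"

lemma rf_const_0[simp]: "rf_const 0 = 0"
  by (simp add: rf_const_def Zero_fract_def eq_fract)
lemma rf_const_1[simp]: "rf_const 1 = 1"
  by (simp add: rf_const_def One_fract_def pCons_one)
lemma rf_const_add: "rf_const (a + b) = rf_const a + rf_const b"
  by (simp add: rf_const_def)
lemma rf_const_mult: "rf_const (a * b) = rf_const a * rf_const b"
  by (simp add: rf_const_def)

lemma map_poly_rf_mult: "map_poly rf_const (p * q) = map_poly rf_const p * map_poly rf_const q"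
proof (induction p)
  case 0 then show ?case by simp
next
  case (pCons a p)
  have "map_poly rf_const (pCons a p * q) = map_poly rf_const (smult a q + pCons 0 (p * q))"
    by (simp add: mult_pCons_left)
  also have "\<dots> = map_poly rf_const (smult a q) + map_poly rf_const (pCons 0 (p * q))"
    by (intro poly_eqI) (simp add: coeff_map_poly rf_const_add)
  also have "\<dots> = smult (rf_const a) (map_poly rf_const q) + pCons 0 (map_poly rf_const p * map_poly rf_const q)"
    by (simp add: map_poly_smult rf_const_mult map_poly_pCons pCons.IH)
  also have "\<dots> = map_poly rf_const (pCons a p) * map_poly rf_const q"
    by (simp add: map_poly_pCons mult_pCons_left)
  finally show ?case .
qed

lemma rfc_mult: "rfc (p * q) = rfc p * rfc q"
  by (simp add: rfc_def map_poly_rf_mult fps_of_poly_mult)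
lemma rfc_1[simp]: "rfc 1 = 1" by (simp add: rfc_def)
lemma rfc_monom: "rfc (monom c i) = fps_const (rf_const c) * fps_X ^ i"
  by (simp add: rfc_def map_poly_monom fps_of_poly_monom)

lemma phi_Nil[simp]: "phi [] = 0" by (simp add: phi_def)
lemma phi_append: "phi (a @ b) = phi a + phi b" by (simp add: phi_def)
lemma phi_Cons: "phi ((c,w) # a) = rfc c * (\<Prod>(s, i, b) \<leftarrow> w. fps_const (if b then inverse (cyc_val s) else cyc_val s)) + phi a"
  by (simp add: phi_def rfc_def)
lemma phi_sc: "phi (sc c a) = rfc c * phi a"
  by (induction a) (auto simp: sc_def phi_Cons rfc_mult algebra_simps)


definition mc :: "'k::comm_ring_1 \<Rightarrow> letter \<Rightarrow> 'k poly" where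
  "mc \<beta> l = (case l of (s,i,b) \<Rightarrow> (case s of ME \<Rightarrow> monom \<beta> i | _ \<Rightarrow> monom 1 i))"
definition img :: "letter \<Rightarrow> letter list" where
  "img l = (case l of (s,i,b) \<Rightarrow> (case s of ME \<Rightarrow> [(ME,i,False),(MZ,Suc i,False)]
                                        | _ \<Rightarrow> [(MY,i,False),(MX,Suc i,False)]))"
definition posw :: "letter list \<Rightarrow> bool" where
  "posw w = (\<forall>l\<in>set w. snd (snd l) = False)"
definition tj :: "letter list \<Rightarrow> nat \<Rightarrow> letter list" where
  "tj w j = take j w @ img (w!j) @ map up_letter (drop (Suc j) w)"

lemma letter_rule_pos: "snd (snd l) = False \<Longrightarrow> letter_rule (cyc_rule \<beta>) l = [(mc \<beta> l, img l)]"
  by (cases l; cases "fst l") (auto simp: mc_def img_def cyc_rule_def)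

lemma D_word_pos: "posw w \<Longrightarrow> D_word (cyc_rule \<beta>) w = map (\<lambda>j. (mc \<beta> (w!j), tj w j)) [0..<length w]"
  unfolding D_word_def
  apply (rule trans[of _ "concat (map (\<lambda>j. [(mc \<beta> (w!j), tj w j)]) [0..<length w])"])
   apply (rule arg_cong[where f=concat])
   apply (rule map_cong[OF refl])
   apply (subst letter_rule_pos)
    apply (simp add: posw_def)
   apply (simp add: elt_mult_def word_elt_def tj_def)
  by (simp add: concat_map_singleton)

definition fD :: "'k::idom \<Rightarrow> nat \<Rightarrow> letter list \<Rightarrow> 'k ratfun fps" where
  "fD \<beta> n w = phi ((qD (cyc_rule \<beta>) ^^ n) [(1,w)])"

lemma phi_qDn_list: "phi ((qD r ^^ n) a) = (\<Sum>(c,w)\<leftarrow>a. rfc c * phi ((qD r ^^ n) [(1,w)]))"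
proof (induction a)
  case Nil
  have "(qD r ^^ n) [] = []" by (induction n) (simp_all add: qD_def)
  then show ?case by simp
next
  case (Cons p a)
  obtain c w where p: "p = (c,w)" by (cases p)
  have "(qD r ^^ n) (p # a) = (qD r ^^ n) (sc c [(1,w)]) @ (qD r ^^ n) a"
    using qDn_append[where r=r and n=n and a="[p]" and b=a] by (simp add: p sc_def)
  then show ?case by (simp add: qDn_sc phi_append phi_sc Cons.IH p)
qed

lemma posw_tj: "posw w \<Longrightarrow> posw (tj w j)"
proof -
  have u: "snd (snd (up_letter l)) = snd (snd l)" for l by (cases l) auto
  have i: "x \<in> set (img l) \<Longrightarrow> snd (snd x) = False" for x l
    by (cases l) (auto simp: img_def split: mvar.splits)
  assume w: "posw w"
  show "posw (tj w j)"
    unfolding posw_def tj_def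
  proof
    fix x assume "x \<in> set (take j w @ img (w!j) @ map up_letter (drop (Suc j) w))"
    then consider "x\<in>set (take j w)" | "x\<in>set (img (w!j))" | "\<exists>y\<in>set (drop (Suc j) w). x = up_letter y"
      by auto
    then show "snd (snd x) = False"
      using w u i unfolding posw_def by cases (fastforce dest: in_set_takeD in_set_dropD)+
  qed
qed


lemma fD_Suc:
  assumes "posw w"
  shows "fD \<beta> (Suc n) w = (\<Sum>j<length w. rfc (mc \<beta> (w!j)) * fD \<beta> n (tj w j))"
proof -
  have "(qD (cyc_rule \<beta>) ^^ Suc n) [(1,w)] = (qD (cyc_rule \<beta>) ^^ n) (qD (cyc_rule \<beta>) [(1,w)])"
    by (simp only: funpow_Suc_right o_apply)
  also have "qD (cyc_rule \<beta>) [(1,w)] = map (\<lambda>j. (mc \<beta> (w!j), tj w j)) [0..<length w]"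
    by (simp add: qD_single sc_one D_word_pos[OF assms])
  finally have "fD \<beta> (Suc n) w = phi ((qD (cyc_rule \<beta>) ^^ n) (map (\<lambda>j. (mc \<beta> (w!j), tj w j)) [0..<length w]))"
    unfolding fD_def by (rule arg_cong[where f=phi])
  also have "\<dots> = (\<Sum>(c,v)\<leftarrow>map (\<lambda>j. (mc \<beta> (w!j), tj w j)) [0..<length w]. rfc c * phi ((qD (cyc_rule \<beta>) ^^ n) [(1,v)]))"
    by (rule phi_qDn_list)
  also have "\<dots> = (\<Sum>j\<leftarrow>[0..<length w]. rfc (mc \<beta> (w!j)) * fD \<beta> n (tj w j))"
    by (simp only: map_map o_def fD_def prod.case)
  also have "\<dots> = (\<Sum>j=0..<length w. rfc (mc \<beta> (w!j)) * fD \<beta> n (tj w j))"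
    by (simp only: interv_sum_list_conv_sum_set_nat set_upt)
  finally show ?thesis by (simp only: atLeast0LessThan)
qed

lemma fD_0: "fD \<beta> 0 w = (\<Prod>(s, i, b) \<leftarrow> w. fps_const (if b then inverse (cyc_val s) else cyc_val s))"
  unfolding fD_def phi_def by (simp add: rfc_def[symmetric])

lemma fD_0_up: "fD \<beta> 0 (map up_letter w) = fD \<beta> 0 w"
  unfolding fD_0 by (induction w) auto

lemma mc_up: "rfc (mc \<beta> (up_letter l)) = fps_X * rfc (mc \<beta> l)"
  by (cases l) (auto simp: mc_def rfc_monom split: mvar.splits)

lemma img_up: "img (up_letter l) = map up_letter (img l)"
  by (cases l) (auto simp: img_def split: mvar.splits)

lemma tj_up: "j < length w \<Longrightarrow> tj (map up_letter w) j = map up_letter (tj w j)"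
  by (simp add: tj_def take_map drop_map img_up)

lemma posw_up: "posw w \<Longrightarrow> posw (map up_letter w)"
proof -
  have u: "snd (snd (up_letter l)) = snd (snd l)" for l by (cases l) auto
  show "posw w \<Longrightarrow> posw (map up_letter w)" using u by (auto simp: posw_def)
qed

lemma fD_up: "posw w \<Longrightarrow> fD \<beta> n (map up_letter w) = fps_X ^ n * fD \<beta> n w"
proof (induction n arbitrary: w)
  case 0 then show ?case by (simp add: fD_0_up)
next
  case (Suc n)
  have "fD \<beta> (Suc n) (map up_letter w) =
        (\<Sum>j<length w. rfc (mc \<beta> (map up_letter w!j)) * fD \<beta> n (tj (map up_letter w) j))"
    using fD_Suc[OF posw_up[OF Suc.prems]] by simp
  also have "\<dots> = (\<Sum>j<length w. fps_X * rfc (mc \<beta> (w!j)) * (fps_X ^ n * fD \<beta> n (tj w j)))"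
    by (intro sum.cong refl) (simp add: mc_up tj_up Suc.IH posw_tj Suc.prems)
  also have "\<dots> = fps_X ^ Suc n * fD \<beta> (Suc n) w"
    by (simp add: fD_Suc[OF Suc.prems] sum_distrib_left algebra_simps)
  finally show ?case .
qed


lemma qpoch_Suc: "qpoch (Suc n) = qpoch n * (1 - fps_X ^ Suc n)"
  by (simp add: qpoch_def prod.nat_ivl_Suc')

lemma qpoch_0_nth: "qpoch n $ 0 = (1::'a::comm_ring_1)"
  by (induction n) (simp_all add: qpoch_Suc qpoch_def)

lemma qpoch_inv: "inverse (qpoch n) * qpoch n = (1 :: 'a::field fps)"
  by (rule inverse_mult_eq_1) (simp add: qpoch_0_nth)

lemma qpoch_nz: "qpoch n \<noteq> (0 :: 'a::field fps)"
  by (metis fps_zero_nth qpoch_0_nth zero_neq_one)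

definition fN :: "'k::idom \<Rightarrow> nat \<Rightarrow> letter list \<Rightarrow> 'k ratfun fps" where
  "fN \<beta> n w = fD \<beta> n w * inverse (qpoch n)"

lemma fN_fD: "fN \<beta> n w * qpoch n = fD \<beta> n w"
  by (simp add: fN_def mult.assoc qpoch_inv)

lemma fN_0: "fN \<beta> 0 w = fD \<beta> 0 w"
  by (simp add: fN_def qpoch_def)

lemma fN_rec:
  assumes "posw w"
  shows "(1 - fps_X ^ Suc n) * fN \<beta> (Suc n) w = (\<Sum>j<length w. rfc (mc \<beta> (w!j)) * fN \<beta> n (tj w j))"
proof -
  have "(1 - fps_X ^ Suc n) * fN \<beta> (Suc n) w * qpoch n = fN \<beta> (Suc n) w * qpoch (Suc n)"
    by (simp add: qpoch_Suc algebra_simps del: qpoch_def)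
  also have "\<dots> = (\<Sum>j<length w. rfc (mc \<beta> (w!j)) * fN \<beta> n (tj w j)) * qpoch n"
    by (simp add: fN_fD fD_Suc[OF assms] sum_distrib_right mult.assoc del: qpoch_def)
  finally show ?thesis using qpoch_nz[of n] mult_right_cancel by blast
qed

lemma fN_up: "posw w \<Longrightarrow> fN \<beta> n (map up_letter w) = fps_X ^ n * fN \<beta> n w"
  by (simp add: fN_def fD_up mult.assoc)

lemma sum_lessThan_add: "(\<Sum>j<(a::nat)+b. f j) = (\<Sum>j<a. f j) + (\<Sum>j<b. f (a+j))"
  by (induction b) (simp_all add: add.assoc)

lemma posw_append: "posw (v @ w) \<longleftrightarrow> posw v \<and> posw w"
  by (auto simp: posw_def)

lemma tj_append1: "j < length v \<Longrightarrow> tj (v @ w) j = tj v j @ map up_letter w"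
  by (simp add: tj_def nth_append)

lemma tj_append2: "tj (v @ w) (length v + j) = v @ tj w j"
  by (simp add: tj_def nth_append)

lemma swap1: "(\<Sum>j\<in>A. r j * (\<Sum>k\<in>B. F j k * c k)) = (\<Sum>k\<in>B. (\<Sum>j\<in>A. r j * F j k) * (c k::'a::comm_ring_1))"
  unfolding sum_distrib_left sum_distrib_right mult.assoc by (rule sum.swap)

lemma swap2: "(\<Sum>j\<in>A. r j * (\<Sum>k\<in>B. a k * G j k)) = (\<Sum>k\<in>B. a k * (\<Sum>j\<in>A. r j * (G j k::'a::comm_ring_1)))"
  unfolding sum_distrib_left by (subst sum.swap) (simp add: mult.left_commute)

lemma fN_leibniz:
  assumes "posw v" "posw w"
  shows "fN \<beta> n (v @ w) = (\<Sum>k\<le>n. fN \<beta> k v * fN \<beta> (n-k) w)"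
  using assms
proof (induction n arbitrary: v w)
  case 0
  then show ?case by (simp add: fN_0 fD_0)
next
  case (Suc n)
  define a where "a i = fN \<beta> i v" for i
  define b where "b i = fN \<beta> i w" for i
  define X :: "'a ratfun fps" where "X = fps_X"
  define g where "g i = (X^(Suc n - i) - X^Suc n) * a i * b (Suc n - i)" for i
  define h where "h i = (1 - X^(Suc n - i)) * a i * b (Suc n - i)" for i
  have "(1 - X ^ Suc n) * fN \<beta> (Suc n) (v @ w) =
     (\<Sum>j<length v + length w. rfc (mc \<beta> ((v@w)!j)) * fN \<beta> n (tj (v@w) j))"
    using fN_rec[of "v@w"] Suc.prems by (simp add: posw_append X_def)
  also have "\<dots> = (\<Sum>j<length v. rfc (mc \<beta> (v!j)) * fN \<beta> n (tj v j @ map up_letter w))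
                 + (\<Sum>j<length w. rfc (mc \<beta> (w!j)) * fN \<beta> n (v @ tj w j))"
    unfolding sum_lessThan_add
    by (intro arg_cong2[where f="(+)"] sum.cong refl) (simp_all add: nth_append tj_append1 tj_append2)
  also have "\<dots> = (\<Sum>j<length v. rfc (mc \<beta> (v!j)) * (\<Sum>k\<le>n. fN \<beta> k (tj v j) * (X^(n-k) * b (n-k))))
                 + (\<Sum>j<length w. rfc (mc \<beta> (w!j)) * (\<Sum>k\<le>n. a k * fN \<beta> (n-k) (tj w j)))"
  proof -
    have IH1: "fN \<beta> n (tj v j @ map up_letter w) = (\<Sum>k\<le>n. fN \<beta> k (tj v j) * (X^(n-k) * b (n-k)))" for j
      using Suc.IH[OF posw_tj[OF Suc.prems(1)] posw_up[OF Suc.prems(2)]]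
      by (simp only: fN_up[OF Suc.prems(2)] b_def X_def)
    have IH2: "fN \<beta> n (v @ tj w j) = (\<Sum>k\<le>n. a k * fN \<beta> (n-k) (tj w j))" for j
      using Suc.IH[OF Suc.prems(1) posw_tj[OF Suc.prems(2)]] by (simp only: a_def)
    show ?thesis by (simp only: IH1 IH2)
  qed
  also have "\<dots> = (\<Sum>k\<le>n. (\<Sum>j<length v. rfc (mc \<beta> (v!j)) * fN \<beta> k (tj v j)) * X^(n-k) * b (n-k))
                 + (\<Sum>k\<le>n. a k * (\<Sum>j<length w. rfc (mc \<beta> (w!j)) * fN \<beta> (n-k) (tj w j)))"
    apply (subst swap1)
    apply (subst swap2)
    by (simp only: mult.assoc)
  also have "\<dots> = (\<Sum>k\<le>n. (1 - X^Suc k) * a (Suc k) * X^(n-k) * b (n-k))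
                 + (\<Sum>k\<le>n. a k * ((1 - X^Suc (n-k)) * b (Suc (n-k))))"
    by (intro arg_cong2[where f="(+)"] sum.cong refl)
       (simp_all only: fN_rec[OF Suc.prems(1), symmetric] fN_rec[OF Suc.prems(2), symmetric] a_def b_def X_def)
  also have "\<dots> = (\<Sum>k\<le>n. g (Suc k)) + (\<Sum>k\<le>n. h k)"
  proof (intro arg_cong2[where f="(+)"] sum.cong refl)
    fix k assume "k \<in> {..n}"
    then have k: "k \<le> n" by simp
    have kk: "Suc k + (n - k) = Suc n" using k by simp
    have e: "X ^ Suc k * X ^ (n - k) = X ^ Suc n"
      by (metis kk power_add)
    show "(1 - X^Suc k) * a (Suc k) * X^(n-k) * b (n-k) = g (Suc k)"
    proof -
      have "(1 - X^Suc k) * X^(n-k) = X^(n-k) - X^Suc n"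
        by (simp only: left_diff_distrib mult_1 e)
      then show ?thesis unfolding g_def by (simp add: ac_simps)
    qed
    show "a k * ((1 - X^Suc (n-k)) * b (Suc (n-k))) = h k"
      unfolding h_def using k by (simp add: Suc_diff_le algebra_simps)
  qed
  also have "\<dots> = (\<Sum>k\<le>Suc n. g k) + (\<Sum>k\<le>Suc n. h k)"
  proof -
    have g0: "g 0 = 0" by (simp add: g_def)
    have hS: "h (Suc n) = 0" by (simp add: h_def)
    show ?thesis by (simp only: sum.atMost_Suc_shift[of g] sum.atMost_Suc[of h] g0 hS add_0_left add_0_right)
  qed
  also have "\<dots> = (\<Sum>k\<le>Suc n. g k + h k)"
    by (simp only: sum.distrib)
  also have "\<dots> = (\<Sum>k\<le>Suc n. (1 - X ^ Suc n) * (a k * b (Suc n - k)))"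
    by (intro sum.cong refl) (simp add: g_def h_def algebra_simps)
  also have "\<dots> = (1 - X ^ Suc n) * (\<Sum>k\<le>Suc n. a k * b (Suc n - k))"
    by (simp only: sum_distrib_left)
  finally have "(1 - X ^ Suc n) * fN \<beta> (Suc n) (v @ w) = (1 - X ^ Suc n) * (\<Sum>k\<le>Suc n. a k * b (Suc n - k))" .
  moreover have "(1 - X ^ Suc n) \<noteq> 0"
  proof
    assume "(1 - X ^ Suc n) = 0"
    then have "(1 - X ^ Suc n) $ 0 = 0" by simp
    then show False by (simp add: X_def)
  qed
  ultimately have "fN \<beta> (Suc n) (v @ w) = (\<Sum>k\<le>Suc n. a k * b (Suc n - k))"
    using mult_left_cancel by blast
  then show ?case by (simp only: a_def b_def)
qed



definition Sc :: "'a::comm_ring_1 \<Rightarrow> 'a fps \<Rightarrow> 'a fps" where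
  "Sc a A = Abs_fps (\<lambda>n. a^n * A$n)"

lemma Sc_nth[simp]: "Sc a A $ n = a^n * A$n" by (simp add: Sc_def)

lemma Sc_mult: "Sc a (A * B) = Sc a A * Sc a B"
proof (rule fps_ext)
  fix n
  have "Sc a (A * B) $ n = (\<Sum>i=0..n. a^i * A$i * (a^(n-i) * B$(n-i)))"
    by (simp add: fps_mult_nth sum_distrib_left)
       (intro sum.cong refl, simp add: algebra_simps power_add[symmetric])
  then show "Sc a (A * B) $ n = (Sc a A * Sc a B) $ n"
    by (simp add: fps_mult_nth mult.assoc)
qed

lemma Sc_add: "Sc a (A + B) = Sc a A + Sc a B"
  by (rule fps_ext) (simp add: algebra_simps)
lemma Sc_diff: "Sc a (A - B) = Sc a A - Sc a B"
  by (rule fps_ext) (simp add: algebra_simps)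
lemma Sc_const: "Sc a (fps_const c) = fps_const c"
  by (rule fps_ext) simp
lemma Sc_one: "Sc a 1 = 1"
  by (rule fps_ext) simp
lemma Sc_X: "Sc a fps_X = fps_const a * fps_X"
  by (rule fps_ext) (simp add: fps_X_def)
lemma Sc_Sc: "Sc a (Sc b A) = Sc (a*b) A"
  by (rule fps_ext) (simp add: power_mult_distrib)
lemma Sc_1: "Sc 1 A = A"
  by (rule fps_ext) simp

lemma inv_right:
  fixes f :: "'a::{comm_ring_1,inverse} fps"
  assumes "f$0 * inverse (f$0) = 1"
  shows "f * inverse f = 1"
  using fps_right_inverse[OF assms] by (simp add: fps_inverse_def)

lemma inv_nth0: "(inverse (f::'a::{comm_ring_1,inverse} fps)) $ 0 = inverse (f $ 0)"
  by (simp add: fps_inverse_def)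

lemma inv_unique:
  fixes f g :: "'a::comm_ring_1 fps"
  assumes "f * g = 1" "f * h = 1"
  shows "g = h"
proof -
  have "g = g * (f * h)" using assms by simp
  also have "\<dots> = (f * g) * h" by (simp add: algebra_simps)
  finally show ?thesis using assms by simp
qed

lemma Sc_inverse:
  fixes A :: "'a::{comm_ring_1,inverse} fps"
  assumes "A$0 * inverse (A$0) = 1"
  shows "Sc a (inverse A) = inverse (Sc a A)"
proof (rule inv_unique)
  show "Sc a A * Sc a (inverse A) = 1"
    by (simp add: Sc_mult[symmetric] inv_right[OF assms] Sc_one)
  show "Sc a A * inverse (Sc a A) = 1"
    by (rule inv_right) (simp add: assms)
qed

definition GW :: "'k::idom \<Rightarrow> letter list \<Rightarrow> 'k ratfun fps fps" where
  "GW \<beta> w = Abs_fps (\<lambda>n. fN \<beta> n w)"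

lemma GW_nth[simp]: "GW \<beta> w $ n = fN \<beta> n w" by (simp add: GW_def)

lemma gen_phi_GW: "gen_phi \<beta> [(1,w)] c = Sc c (GW \<beta> w)"
  by (rule fps_ext) (simp add: gen_phi_def fN_def fD_def algebra_simps)

lemma GW_append: "posw v \<Longrightarrow> posw w \<Longrightarrow> GW \<beta> (v @ w) = GW \<beta> v * GW \<beta> w"
  by (rule fps_ext) (simp add: fN_leibniz fps_mult_nth atLeast0AtMost)

lemma GW_up: "posw w \<Longrightarrow> GW \<beta> (map up_letter w) = Sc fps_X (GW \<beta> w)"
  by (rule fps_ext) (simp add: fN_up)



abbreviation CC :: "'a::comm_ring_1 \<Rightarrow> 'a fps fps" where "CC c \<equiv> fps_const (fps_const c)"

lemma X1nz: "(1 - fps_X ^ Suc n :: 'a::field fps) \<noteq> 0"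
proof
  assume "(1 - fps_X ^ Suc n :: 'a fps) = 0"
  then have "(1 - fps_X ^ Suc n :: 'a fps) $ 0 = 0" by simp
  then show False by simp
qed

lemma posw_single: "posw [(s,i,False)]" by (simp add: posw_def)

lemma tj_single: "tj [l] 0 = img l" by (simp add: tj_def)

lemma fN_single_Suc:
  assumes "s \<noteq> ME"
  shows "fN \<beta> (Suc n) [(s,i,False)] = fN \<beta> (Suc n) [(MX,i,False)]"
proof -
  have h: "(1 - fps_X ^ Suc n) * fN \<beta> (Suc n) [(t,i,False)] = rfc (monom 1 i) * fN \<beta> n [(MY,i,False),(MX,Suc i,False)]"
    if "t \<noteq> ME" for t
    unfolding fN_rec[OF posw_single] using that by (cases t) (simp_all add: tj_single mc_def img_def)
  have "(1 - fps_X ^ Suc n) * fN \<beta> (Suc n) [(s,i,False)] = (1 - fps_X ^ Suc n) * fN \<beta> (Suc n) [(MX,i,False)]"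
    using h[of s] h[of MX] assms by simp
  then show ?thesis using X1nz mult_left_cancel by blast
qed

lemma fN_single_0: "fN \<beta> 0 [(s,i,False)] = fps_const (cyc_val s)"
  by (simp add: fN_0 fD_0)

lemma rf_x_nz: "(rf_x :: 'k::idom ratfun) \<noteq> 0"
  by (simp add: rf_x_def Zero_fract_def eq_fract)
lemma rf_x_ne_y: "(rf_x :: 'k::idom ratfun) \<noteq> rf_y"
  by (simp add: rf_x_def rf_y_def eq_fract)
lemma one_minus_nz: "1 - inverse rf_x * rf_y \<noteq> (0 :: 'k::idom ratfun)"
proof
  assume "1 - inverse rf_x * rf_y = (0 :: 'k ratfun)"
  then have "rf_y = (rf_x :: 'k ratfun)" using rf_x_nz by (simp add: field_simps)
  moreover have "rf_x \<noteq> (rf_y :: 'k ratfun)" by (rule rf_x_ne_y)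
  ultimately show False by simp
qed

lemma uniq:
  fixes A B :: "'a::field fps fps"
  assumes "A$0 = B$0"
    and rA: "\<And>n. (1 - fps_X^Suc n) * A$Suc n = (\<Sum>k\<le>n. (A - c)$k * (fps_X^(n-k) * A$(n-k)))"
    and rB: "\<And>n. (1 - fps_X^Suc n) * B$Suc n = (\<Sum>k\<le>n. (B - c)$k * (fps_X^(n-k) * B$(n-k)))"
  shows "A = B"
proof -
  have "\<forall>k\<le>m. A$k = B$k" for m
  proof (induction m)
    case 0 then show ?case using assms(1) by simp
  next
    case (Suc m)
    have "(1 - fps_X^Suc m) * A$Suc m = (\<Sum>k\<le>m. (A - c)$k * (fps_X^(m-k) * A$(m-k)))"
      by (rule rA)
    also have "\<dots> = (\<Sum>k\<le>m. (B - c)$k * (fps_X^(m-k) * B$(m-k)))"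
    proof (rule sum.cong[OF refl])
      fix k assume "k \<in> {..m}"
      then have "A$k = B$k" "A$(m-k) = B$(m-k)" using Suc.IH by auto
      then show "(A - c)$k * (fps_X^(m-k) * A$(m-k)) = (B - c)$k * (fps_X^(m-k) * B$(m-k))"
        by simp
    qed
    also have "\<dots> = (1 - fps_X^Suc m) * B$Suc m"
      by (rule rB[symmetric])
    finally
    have "A$Suc m = B$Suc m" by (rule mult_left_cancel[OF X1nz, THEN iffD1])
    then show ?case using Suc.IH le_Suc_eq by auto
  qed
  then have "A$n = B$n" for n by blast
  then show ?thesis by (rule fps_ext)
qed



lemma GW_y0: "GW \<beta> [(MY,0,False)] = GW \<beta> [(MX,0,False)] - CC (rf_x - rf_y)"
proof (rule fps_ext)
  fix n show "GW \<beta> [(MY,0,False)] $ n = (GW \<beta> [(MX,0,False)] - CC (rf_x - rf_y)) $ n"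
    by (cases n) (simp_all add: fN_single_0 cyc_val_def fN_single_Suc[of MY])
qed

lemma GW_z0: "GW \<beta> [(MZ,0,False)] = GW \<beta> [(MX,0,False)] + CC (rf_z - rf_x)"
proof (rule fps_ext)
  fix n show "GW \<beta> [(MZ,0,False)] $ n = (GW \<beta> [(MX,0,False)] + CC (rf_z - rf_x)) $ n"
    by (cases n) (simp_all add: fN_single_0 cyc_val_def fN_single_Suc[of MZ])
qed

lemma W_rec: "(1 - fps_X^Suc n) * GW \<beta> [(MX,0,False)] $ Suc n =
   (\<Sum>k\<le>n. (GW \<beta> [(MX,0,False)] - CC (rf_x - rf_y))$k * (fps_X^(n-k) * GW \<beta> [(MX,0,False)] $(n-k)))"
proof -
  have "(1 - fps_X^Suc n) * GW \<beta> [(MX,0,False)] $ Suc n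
      = rfc (monom 1 0) * fN \<beta> n [(MY,0,False),(MX,Suc 0,False)]"
    unfolding GW_nth fN_rec[OF posw_single] by (simp add: tj_single mc_def img_def)
  also have "\<dots> = fN \<beta> n ([(MY,0,False)] @ map up_letter [(MX,0,False)])"
    by (simp add: rfc_monom)
  also have "\<dots> = (\<Sum>k\<le>n. fN \<beta> k [(MY,0,False)] * fN \<beta> (n-k) (map up_letter [(MX,0,False)]))"
    by (rule fN_leibniz[OF posw_single posw_up[OF posw_single]])
  also have "\<dots> = (\<Sum>k\<le>n. (GW \<beta> [(MX,0,False)] - CC (rf_x - rf_y))$k * (fps_X^(n-k) * GW \<beta> [(MX,0,False)] $(n-k)))"
  proof (rule sum.cong[OF refl])
    fix k
    have "(GW \<beta> [(MX,0,False)] - CC (rf_x - rf_y))$k = fN \<beta> k [(MY,0,False)]"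
      by (simp only: GW_y0[symmetric] GW_nth)
    then show "fN \<beta> k [(MY,0,False)] * fN \<beta> (n-k) (map up_letter [(MX,0,False)]) =
      (GW \<beta> [(MX,0,False)] - CC (rf_x - rf_y))$k * (fps_X^(n-k) * GW \<beta> [(MX,0,False)] $(n-k))"
      by (simp only: fN_up[OF posw_single] GW_nth)
  qed
  finally show ?thesis .
qed

definition e0 :: "'k::idom ratfun fps fps" where "e0 = eq_exp (fps_const (rf_x - rf_y))"
definition PP :: "'k::idom ratfun fps fps" where "PP = 1 - CC (inverse rf_x * rf_y) * e0"
definition WW :: "'k::idom ratfun fps fps" where "WW = CC (rf_x - rf_y) * inverse PP"

lemma eq_exp_nth: "eq_exp a $ n = a ^ n * inverse (qpoch n)"
  by (simp add: eq_exp_def)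

lemma qpoch_0: "qpoch 0 = 1" by (simp add: qpoch_def)

lemma qinv_step: "(1 - fps_X^Suc m) * inverse (qpoch (Suc m)) = (inverse (qpoch m) :: 'a::field fps)"
proof (rule inv_unique)
  show "qpoch m * ((1 - fps_X^Suc m) * inverse (qpoch (Suc m))) = (1 :: 'a fps)"
    using qpoch_inv[of "Suc m", where 'a='a] by (simp only: qpoch_Suc mult.assoc mult.commute)
  show "qpoch m * inverse (qpoch m) = (1::'a fps)"
    using qpoch_inv[of m, where 'a='a] by (simp only: mult.commute)
qed

lemma e0_rec: "e0 - Sc fps_X e0 = fps_X * CC (rf_x - rf_y) * (e0 :: 'k::idom ratfun fps fps)"
proof (rule fps_ext)
  fix n
  show "(e0 - Sc fps_X e0) $ n = (fps_X * CC (rf_x - rf_y) * (e0 :: 'k ratfun fps fps)) $ n"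
  proof (cases n)
    case 0 then show ?thesis by simp
  next
    case (Suc m)
    have "(e0 - Sc fps_X e0) $ n = (1 - fps_X^Suc m) * inverse (qpoch (Suc m)) * fps_const (rf_x - rf_y) ^ Suc m"
      by (simp add: Suc e0_def eq_exp_nth algebra_simps)
    also have "\<dots> = fps_const (rf_x - rf_y) * (fps_const (rf_x - rf_y) ^ m * inverse (qpoch m))"
      by (simp only: qinv_step) (simp add: algebra_simps)
    also have "\<dots> = (fps_X * CC (rf_x - rf_y) * (e0 :: 'k ratfun fps fps)) $ n"
      by (simp add: Suc e0_def eq_exp_nth mult.assoc)
    finally show ?thesis .
  qed
qed



lemma e0_0: "e0 $ 0 = 1"
  by (simp add: e0_def eq_exp_nth qpoch_0)

lemma PP_0: "PP $ 0 = fps_const (1 - inverse rf_x * rf_y)"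
  by (simp add: PP_def e0_0)

lemma PP_unit: "PP $ 0 * inverse (PP $ 0) = (1 :: 'k::idom ratfun fps)"
  unfolding PP_0 by (rule inverse_mult_eq_1') (simp, metis one_minus_nz right_minus_eq)

lemma PP_inv: "PP * inverse PP = (1 :: 'k::idom ratfun fps fps)"
  by (rule inv_right[OF PP_unit])

lemma Sc_e0: "Sc a e0 = eq_exp (fps_const (rf_x - rf_y) * a)"
  by (rule fps_ext) (simp add: e0_def eq_exp_nth power_mult_distrib mult_ac)

lemma Sc_PP: "Sc a PP = 1 - CC (inverse rf_x * rf_y) * Sc a e0"
  by (simp add: PP_def Sc_diff Sc_one Sc_mult Sc_const)

lemma Sc_PP_0: "(Sc a PP) $ 0 = PP $ 0" by simp

lemma Sc_PP_inv: "Sc a PP * inverse (Sc a PP) = (1 :: 'k::idom ratfun fps fps)"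
  by (rule inv_right) (simp only: Sc_PP_0 PP_unit)

lemma Sc_WW: "Sc a WW = CC (rf_x - rf_y) * inverse (Sc a PP)"
  by (simp add: WW_def Sc_mult Sc_const Sc_inverse[OF PP_unit])

lemma SPP: "Sc fps_X PP - PP = fps_X * CC (rf_x - rf_y) * (1 - (PP :: 'k::idom ratfun fps fps))"
proof -
  have "Sc fps_X PP - PP = CC (inverse rf_x * rf_y) * (e0 - Sc fps_X e0)"
    by (simp only: Sc_PP) (simp add: PP_def algebra_simps)
  also have "\<dots> = fps_X * CC (rf_x - rf_y) * (1 - (PP :: 'k::idom ratfun fps fps))"
    by (simp add: e0_rec PP_def algebra_simps)
  finally show ?thesis .
qed

lemma riccati_alg:
  fixes P SP iP iSP u c :: "'a::comm_ring_1"
  assumes h1: "iP*P = 1" and h2: "iSP*SP = 1" and h3: "SP - P = u*c*(1-P)"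
  shows "c*iP - c*iSP = u*(c*iP - c)*(c*iSP)"
proof -
  have a: "c*iP*iSP*SP = c*iP" by (metis h2 mult.assoc mult_1_right)
  have b: "c*iP*iSP*P = c*iSP" by (metis h1 mult.assoc mult.commute mult_1_right)
  have "c*iP - c*iSP = c*iP*iSP*(SP - P)" by (simp add: right_diff_distrib a b)
  also have "\<dots> = c*iP*iSP*(u*c*(1-P))" by (simp add: h3)
  also have "\<dots> = u*c*(c*iSP)*(iP - iP*P)" by (simp add: algebra_simps)
  also have "\<dots> = u*c*(c*iSP)*(iP - 1)" by (simp add: h1)
  also have "\<dots> = u*(c*iP - c)*(c*iSP)" by (simp add: algebra_simps)
  finally show ?thesis .
qed

lemma WW_ric: "WW - Sc fps_X WW = fps_X * (WW - CC (rf_x - rf_y)) * Sc fps_X (WW :: 'k::idom ratfun fps fps)"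
proof -
  have "CC (rf_x - rf_y) * inverse PP - CC (rf_x - rf_y) * inverse (Sc fps_X PP) =
        fps_X * (CC (rf_x - rf_y) * inverse PP - CC (rf_x - rf_y)) * (CC (rf_x - rf_y) * inverse (Sc fps_X (PP :: 'k ratfun fps fps)))"
    by (rule riccati_alg[where P=PP and SP="Sc fps_X PP"]) (metis PP_inv mult.commute, metis Sc_PP_inv mult.commute, rule SPP)
  then show ?thesis unfolding Sc_WW by (simp only: WW_def)
qed

lemma WW_0: "WW $ 0 = fps_const (rf_x :: 'k::idom ratfun)"
proof -
  have "WW $ 0 = fps_const (rf_x - rf_y) * inverse (fps_const (1 - inverse rf_x * rf_y))"
    by (simp add: WW_def inv_nth0 PP_0)
  also have "\<dots> = fps_const ((rf_x - rf_y) * inverse (1 - inverse rf_x * rf_y))"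
    by (simp add: fps_const_inverse)
  also have "(rf_x - rf_y) * inverse (1 - inverse rf_x * rf_y) = (rf_x :: 'k ratfun)"
  proof -
    have xnz: "rf_x \<noteq> (0::'k ratfun)" by (rule rf_x_nz)
    have ne: "rf_x \<noteq> (rf_y::'k ratfun)" by (rule rf_x_ne_y)
    have "rf_x - rf_y \<noteq> (0::'k ratfun)" using ne by simp
    moreover have "1 - inverse rf_x * rf_y = (rf_x - rf_y) * inverse (rf_x::'k ratfun)"
    proof -
      have "(rf_x - rf_y) * inverse (rf_x::'k ratfun) = rf_x * inverse rf_x - rf_y * inverse rf_x"
        by (rule left_diff_distrib)
      also have "\<dots> = 1 - inverse rf_x * rf_y" using xnz by (simp add: mult.commute)
      finally show ?thesis by simp
    qed
    ultimately show ?thesis using xnz by (simp add: field_simps)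
  qed
  finally show ?thesis .
qed

lemma WW_rec: "(1 - fps_X^Suc n) * WW $ Suc n =
   (\<Sum>k\<le>n. (WW - CC (rf_x - rf_y))$k * (fps_X^(n-k) * (WW :: 'k::idom ratfun fps fps) $(n-k)))"
proof -
  have "(1 - fps_X^Suc n) * WW $ Suc n = (WW - Sc fps_X WW) $ Suc n"
    by (simp add: algebra_simps)
  also have "\<dots> = ((WW - CC (rf_x - rf_y)) * Sc fps_X WW) $ n"
    by (simp only: WW_ric mult.assoc fps_X_mult_nth) simp
  also have "\<dots> = (\<Sum>k\<le>n. (WW - CC (rf_x - rf_y))$k * (fps_X^(n-k) * WW $(n-k)))"
    by (simp only: fps_mult_nth atLeast0AtMost Sc_nth)
  finally show ?thesis .
qed

lemma W_eq: "GW \<beta> [(MX,0,False)] = WW"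
  apply (rule uniq[where c="CC (rf_x - rf_y)"])
    apply (simp only: GW_nth fN_single_0 WW_0 cyc_val_def mvar.case)
   apply (rule W_rec)
  by (rule WW_rec)



lemma Z_eq: "GW \<beta> [(MZ,1,False)] = Sc fps_X WW + CC (rf_z - rf_x)"
proof -
  have "[(MZ,1,False)] = map up_letter [(MZ,0,False)]" by simp
  then have "GW \<beta> [(MZ,1,False)] = Sc fps_X (GW \<beta> [(MZ,0,False)])"
    by (simp only: GW_up[OF posw_single])
  also have "\<dots> = Sc fps_X WW + CC (rf_z - rf_x)"
    by (simp only: GW_z0 W_eq Sc_add Sc_const)
  finally show ?thesis .
qed

lemma alg2:
  fixes Q iQ E a0 a1 b0 b1 :: "'a::comm_ring_1"
  assumes "Q * iQ = 1" "a0 + a1 * Q = b0 + b1 * E"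
  shows "a0 * iQ + a1 = (b0 + b1*E) * iQ"
proof -
  have "(b0 + b1*E)*iQ = (a0 + a1*Q)*iQ" using assms(2) by simp
  also have "\<dots> = a0*iQ + a1*(Q*iQ)" by (simp add: algebra_simps)
  also have "\<dots> = a0*iQ + a1" using assms(1) by simp
  finally show ?thesis by simp
qed

lemma const_id:
  fixes E :: "'k::idom ratfun fps fps"
  shows "CC (rf_x - rf_y) + CC (rf_z - rf_x) * (1 - CC (inverse rf_x * rf_y) * E) =
         CC (rf_z - rf_y) + CC (inverse rf_x * rf_y * (rf_x - rf_z)) * E"
proof -
  have s1: "rf_z - rf_y = (rf_x - rf_y) + (rf_z - (rf_x :: 'k ratfun))" by simp
  have s2: "inverse rf_x * rf_y * (rf_x - rf_z) = - ((rf_z - rf_x) * (inverse rf_x * (rf_y :: 'k ratfun)))"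
    by (simp add: algebra_simps)
  show ?thesis
    apply (subst s1, subst s2)
    apply (simp only: fps_const_add[symmetric] fps_const_mult[symmetric] fps_const_neg[symmetric])
    by (simp add: algebra_simps del: fps_const_add fps_const_mult fps_const_neg fps_const_sub)
qed

lemma part1:
  "gen_phi \<beta> [(1, [(MZ, 1, False)])] (fps_X ^ k) =
     (fps_const (fps_const (rf_z - rf_y)) +
      fps_const (fps_const (inverse rf_x * rf_y * (rf_x - rf_z))) *
        eq_exp (fps_const (rf_x - rf_y) * fps_X ^ (Suc k)))
     * inverse (1 - fps_const (fps_const (inverse rf_x * rf_y)) *
        eq_exp (fps_const (rf_x - rf_y) * fps_X ^ (Suc k)))"
proof -
  define E :: "'a ratfun fps fps" where "E = eq_exp (fps_const (rf_x - rf_y) * fps_X ^ (Suc k))"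
  define Q where "Q = 1 - CC (inverse rf_x * rf_y) * E"
  have SQ: "Sc (fps_X ^ Suc k) PP = Q"
    by (simp only: Sc_PP Sc_e0 Q_def E_def)
  have Qi: "Q * inverse Q = 1"
    unfolding SQ[symmetric] by (rule Sc_PP_inv)
  have "gen_phi \<beta> [(1, [(MZ, 1, False)])] (fps_X ^ k) = Sc (fps_X ^ k) (Sc fps_X WW) + CC (rf_z - rf_x)"
    by (simp only: gen_phi_GW Z_eq Sc_add Sc_const)
  also have "\<dots> = Sc (fps_X ^ Suc k) WW + CC (rf_z - rf_x)"
    by (simp only: Sc_Sc power_Suc2)
  also have "\<dots> = CC (rf_x - rf_y) * inverse Q + CC (rf_z - rf_x)"
    by (simp only: Sc_WW SQ)
  also have "\<dots> = (CC (rf_z - rf_y) + CC (inverse rf_x * rf_y * (rf_x - rf_z)) * E) * inverse Q"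
    by (rule alg2[OF Qi]) (simp only: Q_def const_id)
  finally show ?thesis by (simp only: Q_def E_def)
qed



lemma E_rec: "GW \<beta> [(ME,0,False)] - Sc fps_X (GW \<beta> [(ME,0,False)]) =
   fps_X * (CC (rf_const \<beta>) * (GW \<beta> [(ME,0,False)] * GW \<beta> [(MZ,1,False)]))"
proof (rule fps_ext)
  fix n
  show "(GW \<beta> [(ME,0,False)] - Sc fps_X (GW \<beta> [(ME,0,False)])) $ n =
   (fps_X * (CC (rf_const \<beta>) * (GW \<beta> [(ME,0,False)] * GW \<beta> [(MZ,1,False)]))) $ n"
  proof (cases n)
    case 0 then show ?thesis by simp
  next
    case (Suc m)
    have "(GW \<beta> [(ME,0,False)] - Sc fps_X (GW \<beta> [(ME,0,False)])) $ n
        = (1 - fps_X^Suc m) * fN \<beta> (Suc m) [(ME,0,False)]"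
      by (simp add: Suc algebra_simps)
    also have "\<dots> = rfc (monom \<beta> 0) * fN \<beta> m [(ME,0,False),(MZ,Suc 0,False)]"
      unfolding fN_rec[OF posw_single] by (simp add: tj_single mc_def img_def)
    also have "\<dots> = fps_const (rf_const \<beta>) * fN \<beta> m ([(ME,0,False)] @ [(MZ,Suc 0,False)])"
      by (simp add: rfc_monom)
    also have "\<dots> = fps_const (rf_const \<beta>) * (\<Sum>k\<le>m. fN \<beta> k [(ME,0,False)] * fN \<beta> (m-k) [(MZ,Suc 0,False)])"
      by (simp only: fN_leibniz[OF posw_single posw_single])
    also have "\<dots> = fps_const (rf_const \<beta>) * (GW \<beta> [(ME,0,False)] * GW \<beta> [(MZ,1,False)]) $ m"
      by (simp only: fps_mult_nth atLeast0AtMost GW_nth One_nat_def)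
    also have "\<dots> = (fps_X * (CC (rf_const \<beta>) * (GW \<beta> [(ME,0,False)] * GW \<beta> [(MZ,1,False)]))) $ n"
      by (simp only: Suc fps_X_mult_nth fps_mult_left_const_nth) simp
    finally show ?thesis .
  qed
qed

definition Qk :: "'k::idom \<Rightarrow> nat \<Rightarrow> 'k ratfun fps fps" where
  "Qk \<beta> k = 1 - fps_const (fps_const (rf_const \<beta>) * fps_X ^ k) * fps_X * gen_phi \<beta> [(1, [(MZ, 1, False)])] (fps_X ^ k)"

lemma Sc_step: "Sc (fps_X^Suc k) (GW \<beta> [(ME,0,False)]) = Sc (fps_X^k) (GW \<beta> [(ME,0,False)]) * Qk \<beta> k"
proof -
  define E where "E = GW \<beta> [(ME,0,False)]"
  define Z where "Z = GW \<beta> [(MZ,1,False)]"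
  have "Sc fps_X E = E * (1 - fps_X * CC (rf_const \<beta>) * Z)"
    using E_rec[of \<beta>] unfolding E_def[symmetric] Z_def[symmetric] by (simp add: algebra_simps)
  then have "Sc (fps_X^k) (Sc fps_X E) = Sc (fps_X^k) E * (1 - fps_const (fps_X^k) * fps_X * CC (rf_const \<beta>) * Sc (fps_X^k) Z)"
    by (simp only: Sc_mult Sc_diff Sc_one Sc_X Sc_const)
  moreover have "Sc (fps_X^k) (Sc fps_X E) = Sc (fps_X^Suc k) E"
    by (simp only: Sc_Sc power_Suc2)
  moreover have "Qk \<beta> k = 1 - fps_const (fps_X^k) * fps_X * CC (rf_const \<beta>) * Sc (fps_X^k) Z"
    by (simp add: Qk_def Z_def gen_phi_GW mult_ac fps_const_mult[symmetric] del: fps_const_mult)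
  ultimately show ?thesis by (simp only: E_def)
qed

lemma Qk_inv: "Qk \<beta> k * inverse (Qk \<beta> k) = 1"
  by (rule inv_right) (simp add: Qk_def fps_inverse_one')

lemma E_prod: "GW \<beta> [(ME,0,False)] = Sc (fps_X^N) (GW \<beta> [(ME,0,False)]) * (\<Prod>k<N. inverse (Qk \<beta> k))"
proof (induction N)
  case 0 then show ?case by (simp add: Sc_1)
next
  case (Suc N)
  have "Sc (fps_X^N) (GW \<beta> [(ME,0,False)]) = Sc (fps_X^Suc N) (GW \<beta> [(ME,0,False)]) * inverse (Qk \<beta> N)"
    by (simp only: Sc_step mult.assoc Qk_inv mult_1_right)
  then show ?case using Suc.IH by (simp add: mult_ac)
qed

lemma E_0: "fN \<beta> 0 [(ME,0,False)] = fps_const rf_e"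
  by (simp add: fN_single_0 cyc_val_def)

lemma part2:
  "(\<lambda>N. fps_nth (fps_const (fps_const rf_e) * (\<Prod>k<N. inverse (Qk \<beta> k))) n)
     \<longlonglongrightarrow> fps_nth (GW \<beta> [(ME,0,False)]) n"
proof (rule tendsto_fpsI)
  fix m
  define E where "E = GW \<beta> [(ME,0,False)]"
  show "eventually (\<lambda>N. fps_nth (fps_nth (fps_const (fps_const rf_e) * (\<Prod>k<N. inverse (Qk \<beta> k))) n) m
         = fps_nth (fps_nth (GW \<beta> [(ME,0,False)]) n) m) sequentially"
  proof (rule eventually_sequentiallyI[of "Suc m"])
    fix N assume N: "Suc m \<le> N"
    define S where "S = Sc (fps_X^N) E"
    define P where "P = (\<Prod>k<N. inverse (Qk \<beta> k))"
    have EP: "E = S * P" unfolding S_def P_def E_def by (rule E_prod)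
    have d: "E - CC rf_e * P = (S - CC rf_e) * P" using EP by (simp add: algebra_simps)
    have t: "(S - CC rf_e) $ i = fps_X^N * (if i = 0 then 0 else (fps_X^N)^(i-1) * E $ i)" for i
    proof (cases i)
      case 0 then show ?thesis by (simp add: S_def E_def E_0)
    next
      case (Suc j) then show ?thesis by (simp add: S_def mult.assoc)
    qed
    have "(E - CC rf_e * P) $ n = fps_X^N * (\<Sum>i=0..n. (if i = 0 then 0 else (fps_X^N)^(i-1) * E $ i) * P $ (n-i))"
      by (simp only: d fps_mult_nth t sum_distrib_left mult.assoc)
    then have "((E - CC rf_e * P) $ n) $ m = 0"
      using N by (simp only: fps_X_power_mult_nth) simp
    then show "fps_nth (fps_nth (fps_const (fps_const rf_e) * (\<Prod>k<N. inverse (Qk \<beta> k))) n) m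
         = fps_nth (fps_nth (GW \<beta> [(ME,0,False)]) n) m"
      by (simp add: P_def E_def)
  qed
qed


theorem theorem5p9:
  fixes \<beta> :: "'k::{idom, ring_char_0}"
  shows "(\<forall>k::nat.
            gen_phi \<beta> [(1, [(MZ, 1, False)])] (fps_X ^ k) =
              (fps_const (fps_const (rf_z - rf_y)) +
               fps_const (fps_const (inverse rf_x * rf_y * (rf_x - rf_z))) *
                 eq_exp (fps_const (rf_x - rf_y) * fps_X ^ (Suc k)))
              * inverse (1 - fps_const (fps_const (inverse rf_x * rf_y)) *
                 eq_exp (fps_const (rf_x - rf_y) * fps_X ^ (Suc k))))
       \<and> (\<forall>n::nat.
            (\<lambda>N. fps_nth (fps_const (fps_const rf_e) *
                    (\<Prod>k<N. inverse (1 - fps_const (fps_const (rf_const \<beta>) * fps_X ^ k) * fps_X *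
                                        gen_phi \<beta> [(1, [(MZ, 1, False)])] (fps_X ^ k)))) n)
            \<longlonglongrightarrow> fps_nth (gen_phi \<beta> [(1, [(ME, 0, False)])] 1) n)"
  proof (intro conjI allI)
  fix k
  show "gen_phi \<beta> [(1, [(MZ, 1, False)])] (fps_X ^ k) =
              (fps_const (fps_const (rf_z - rf_y)) +
               fps_const (fps_const (inverse rf_x * rf_y * (rf_x - rf_z))) *
                 eq_exp (fps_const (rf_x - rf_y) * fps_X ^ (Suc k)))
              * inverse (1 - fps_const (fps_const (inverse rf_x * rf_y)) *
                 eq_exp (fps_const (rf_x - rf_y) * fps_X ^ (Suc k)))"
    by (rule part1)
next
  fix n
  have g: "gen_phi \<beta> [(1, [(ME, 0, False)])] 1 = GW \<beta> [(ME,0,False)]"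
    by (simp only: gen_phi_GW Sc_1)
  show "(\<lambda>N. fps_nth (fps_const (fps_const rf_e) *
                    (\<Prod>k<N. inverse (1 - fps_const (fps_const (rf_const \<beta>) * fps_X ^ k) * fps_X *
                                        gen_phi \<beta> [(1, [(MZ, 1, False)])] (fps_X ^ k)))) n)
            \<longlonglongrightarrow> fps_nth (gen_phi \<beta> [(1, [(ME, 0, False)])] 1) n"
    using part2[of \<beta> n] by (simp only: Qk_def g)
qed

end
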